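(* Let $\mathcal{T}$ be a self-affine tiling of $\mathbb{R}^d$ with expansion map $Q$ and a primitive substitution rule $\omega$ with finite local complexity. Suppose $Q$ is diagonalizable over $\mathbb{C}$ and all eigenvalues of $Q$ are algebraic conjugates of one another, each with the same multiplicity $J$. If there exists an algebraic conjugate $\beta$ of the eigenvalues of $Q$ with $|\beta|<1$, then for every return vector $x\in\mathbb{R}^d\setminus\{0\}$ of $\mathcal{T}$ there is $n_0\in\mathbb{N}$ such that $T+nx\notin\mathcal{T}$ for all $n>n_0$ and all $T\in\mathcal{T}$. Consequently, for each $T\in\mathcal{T}$ and each such $x\neq 0$ there is $n_0>0$ such that $\bigcup_{k=1}^{n_0}(T+kx)$ is not $\mathcal{T}$-legal.
   Context: A tile in $\mathbb{R}^d$ is a compact set equal to the closure of its interior, possibly carrying a label from a fixed finite set; $T+x$ denotes the translate. A patch is a set of tiles any two distinct members of which have disjoint interiors; its support is the closure of the union of the supports. A tiling is a patch with support $\mathbb{R}^d$. A patch $\mathcal{P}$ is $\mathcal{T}$-legal if $\mathcal{P}+x\subset\mathcal{T}$ for some $x$. For a patch $\mathcal{P}$ and $S\subset\mathbb{R}^d$, $\mathcal{P}\sqcap S=\{T\in\mathcal{P}:\operatorname{supp}T\cap S\neq\emptyset\}$. A tiling $\mathcal{T}$ has finite local complexity (FLC) if for each compact $K$ the set $\{\mathcal{T}\sqcap(K+x):x\in\mathbb{R}^d\}$ is finite up to translation, and is repetitive if for every finite $\mathcal{T}$-legal patch $\mathcal{P}$ there is $R>0$ such that every ball of radius $R$ contains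 the support of some translate $\mathcal{P}+x\subset\mathcal{T}$. A return vector of $\mathcal{T}$ is an $x$ such that $T\in\mathcal{T}$ and $T+x\in\mathcal{T}$ for some tile $T$. A substitution rule consists of a finite set $\mathcal{A}$ of prototiles, a linear expansion map $Q$ (all eigenvalues of modulus $>1$), and a map $\omega$ assigning to each $P\in\mathcal{A}$ a finite patch of translates of prototiles with $\operatorname{supp}\omega(P)=Q(\operatorname{supp}P)$, extended by $\omega(P+x)=\omega(P)+Qx$ and unions. It is primitive if some power of its substitution matrix (entry $(i,j)$ = number of translates of the $i$-th prototile in $\omega$ of the $j$-th) is positive, and has FLC if for each compact $K$ the set $\{\omega^n(P)\sqcap(K+x): n>0,P\in\mathcal{A},x\in\mathbb{R}^d\}$ is finite up to translation. A self-affine tiling for $\omega$ is a tiling consisting of translates of prototiles with $\omega(\mathcal{T})=\mathcal{T}$, having FLC and being repetitive. *)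

theory Defs
  imports "HOL-Analysis.Analysis" "HOL-Computational_Algebra.Polynomial"
begin

text \<open>Tiles in R^d (d = CARD('n)): a support set together with a label.\<close>
type_synonym ('n, 'l) tile = "(real^'n) set \<times> 'l"

definition is_tile :: "('n::finite, 'l) tile \<Rightarrow> bool" where
  "is_tile T \<longleftrightarrow> compact (fst T) \<and> closure (interior (fst T)) = fst T \<and> fst T \<noteq> {}"

definition tr :: "('n::finite, 'l) tile \<Rightarrow> real^'n \<Rightarrow> ('n, 'l) tile" where
  "tr T x = ((\<lambda>v. v + x) ` fst T, snd T)"

definition tr_patch :: "('n::finite, 'l) tile set \<Rightarrow> real^'n \<Rightarrow> ('n, 'l) tile set" where
  "tr_patch P x = (\<lambda>T. tr T x) ` P"

definition is_patch :: "('n::finite, 'l) tile set \<Rightarrow> bool" where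
  "is_patch P \<longleftrightarrow> (\<forall>T\<in>P. is_tile T) \<and>
     (\<forall>T\<in>P. \<forall>T'\<in>P. T \<noteq> T' \<longrightarrow> interior (fst T) \<inter> interior (fst T') = {})"

definition supp :: "('n::finite, 'l) tile set \<Rightarrow> (real^'n) set" where
  "supp P = closure (\<Union>T\<in>P. fst T)"

definition is_tiling :: "('n::finite, 'l) tile set \<Rightarrow> bool" where
  "is_tiling P \<longleftrightarrow> is_patch P \<and> supp P = UNIV"

text \<open>A (finite) set of tiles P is T-legal if some translate of it is contained in T.\<close>
definition legal :: "('n::finite, 'l) tile set \<Rightarrow> ('n, 'l) tile set \<Rightarrow> bool" where
  "legal \<T> P \<longleftrightarrow> (\<exists>x. tr_patch P x \<subseteq> \<T>)"

definition sqcap :: "('n::finite, 'l) tile set \<Rightarrow> (real^'n) set \<Rightarrow> ('n, 'l) tile set" where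
  "sqcap P S = {T \<in> P. fst T \<inter> S \<noteq> {}}"

definition finite_upto_tr :: "('n::finite, 'l) tile set set \<Rightarrow> bool" where
  "finite_upto_tr Ps \<longleftrightarrow> (\<exists>F. finite F \<and> (\<forall>P\<in>Ps. \<exists>P'\<in>F. \<exists>y. P = tr_patch P' y))"

definition tiling_FLC :: "('n::finite, 'l) tile set \<Rightarrow> bool" where
  "tiling_FLC \<T> \<longleftrightarrow> (\<forall>K. compact K \<longrightarrow>
      finite_upto_tr {sqcap \<T> ((\<lambda>v. v + x) ` K) | x. True})"

definition repetitive :: "('n::finite, 'l) tile set \<Rightarrow> bool" where
  "repetitive \<T> \<longleftrightarrow> (\<forall>P. finite P \<and> is_patch P \<and> legal \<T> P \<longrightarrow>
      (\<exists>R>0. \<forall>c. \<exists>x. tr_patch P x \<subseteq> \<T> \<and> supp (tr_patch P x) \<subseteq> cball c R))"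

definition return_vector :: "('n::finite, 'l) tile set \<Rightarrow> real^'n \<Rightarrow> bool" where
  "return_vector \<T> x \<longleftrightarrow> (\<exists>T\<in>\<T>. tr T x \<in> \<T>)"

text \<open>Linear algebra of the expansion map Q (a real d x d matrix).\<close>
definition cmat :: "real^'n^'m \<Rightarrow> complex^'n^'m" where
  "cmat Q = (\<chi> i j. complex_of_real (Q $ i $ j))"

definition charpoly :: "real^'n::finite^'n \<Rightarrow> complex poly" where
  "charpoly Q = det (\<chi> i j. (if i = j then [:0, 1:] else 0) - [: cmat Q $ i $ j :])"

definition eigenvalue :: "real^'n::finite^'n \<Rightarrow> complex \<Rightarrow> bool" where
  "eigenvalue Q z \<longleftrightarrow> poly (charpoly Q) z = 0"

text \<open>Algebraic multiplicity of an eigenvalue.\<close>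
definition eig_mult :: "real^'n::finite^'n \<Rightarrow> complex \<Rightarrow> nat" where
  "eig_mult Q z = order z (charpoly Q)"

definition expansion :: "real^'n::finite^'n \<Rightarrow> bool" where
  "expansion Q \<longleftrightarrow> (\<forall>z. eigenvalue Q z \<longrightarrow> cmod z > 1)"

definition diagonalizable_C :: "real^'n::finite^'n \<Rightarrow> bool" where
  "diagonalizable_C Q \<longleftrightarrow> (\<exists>P D :: complex^'n^'n. invertible P \<and>
      (\<forall>i j. i \<noteq> j \<longrightarrow> D $ i $ j = 0) \<and> cmat Q = P ** D ** matrix_inv P)"

text \<open>Algebraic conjugates: roots of a common irreducible polynomial over Q.\<close>
definition alg_conj :: "complex \<Rightarrow> complex \<Rightarrow> bool" where
  "alg_conj a b \<longleftrightarrow> (\<exists>p :: rat poly. irreducible p \<and>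
      poly (map_poly of_rat p) a = 0 \<and> poly (map_poly of_rat p) b = 0)"

text \<open>Substitution rules. \<omega> is given as a map on tiles; on prototiles it is the
  substitution, and it is extended to translates by \<omega>(P+x) = \<omega>(P)+Qx and to patches by unions.\<close>
definition omega_patch :: "(('n::finite, 'l) tile \<Rightarrow> ('n, 'l) tile set) \<Rightarrow> ('n, 'l) tile set \<Rightarrow> ('n, 'l) tile set" where
  "omega_patch \<omega> P = (\<Union>T\<in>P. \<omega> T)"

definition subst_rule :: "('n::finite, 'l) tile set \<Rightarrow> real^'n^'n \<Rightarrow> (('n, 'l) tile \<Rightarrow> ('n, 'l) tile set) \<Rightarrow> bool" where
  "subst_rule A Q \<omega> \<longleftrightarrow> finite A \<and> (\<forall>P\<in>A. is_tile P) \<and> expansion Q \<and>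
     (\<forall>P\<in>A. finite (\<omega> P) \<and> is_patch (\<omega> P) \<and>
        (\<forall>T\<in>\<omega> P. \<exists>P'\<in>A. \<exists>y. T = tr P' y) \<and>
        supp (\<omega> P) = (\<lambda>v. Q *v v) ` fst P) \<and>
     (\<forall>P\<in>A. \<forall>x. \<omega> (tr P x) = tr_patch (\<omega> P) (Q *v x))"

text \<open>Substitution matrix entry (P, P'): number of translates of prototile P in \<omega>(P').\<close>
definition subst_matrix :: "('n::finite, 'l) tile set \<Rightarrow> (('n, 'l) tile \<Rightarrow> ('n, 'l) tile set) \<Rightarrow> ('n, 'l) tile \<Rightarrow> ('n, 'l) tile \<Rightarrow> nat" where
  "subst_matrix A \<omega> P P' = card {x. tr P x \<in> \<omega> P'}"

fun subst_matrix_pow :: "('n::finite, 'l) tile set \<Rightarrow> (('n, 'l) tile \<Rightarrow> ('n, 'l) tile set) \<Rightarrow> nat \<Rightarrow> ('n, 'l) tile \<Rightarrow> ('n, 'l) tile \<Rightarrow> nat" where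
  "subst_matrix_pow A \<omega> 0 P P' = (if P = P' then 1 else 0)"
| "subst_matrix_pow A \<omega> (Suc k) P P' = (\<Sum>R\<in>A. subst_matrix A \<omega> P R * subst_matrix_pow A \<omega> k R P')"

definition primitive :: "('n::finite, 'l) tile set \<Rightarrow> (('n, 'l) tile \<Rightarrow> ('n, 'l) tile set) \<Rightarrow> bool" where
  "primitive A \<omega> \<longleftrightarrow> (\<exists>k>0. \<forall>P\<in>A. \<forall>P'\<in>A. subst_matrix_pow A \<omega> k P P' > 0)"

definition subst_FLC :: "('n::finite, 'l) tile set \<Rightarrow> (('n, 'l) tile \<Rightarrow> ('n, 'l) tile set) \<Rightarrow> bool" where
  "subst_FLC A \<omega> \<longleftrightarrow> (\<forall>K. compact K \<longrightarrow>
     finite_upto_tr {sqcap ((omega_patch \<omega> ^^ n) {P}) ((\<lambda>v. v + x) ` K) | n P x. n > 0 \<and> P \<in> A})"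

definition self_affine_tiling :: "('n::finite, 'l) tile set \<Rightarrow> real^'n^'n \<Rightarrow> (('n, 'l) tile \<Rightarrow> ('n, 'l) tile set) \<Rightarrow> ('n, 'l) tile set \<Rightarrow> bool" where
  "self_affine_tiling A Q \<omega> \<T> \<longleftrightarrow> is_tiling \<T> \<and> (\<forall>T\<in>\<T>. \<exists>P\<in>A. \<exists>y. T = tr P y) \<and>
     omega_patch \<omega> \<T> = \<T> \<and> tiling_FLC \<T> \<and> repetitive \<T>"

end

theory Submission
  imports Defs "HOL-Computational_Algebra.Polynomial_Factorial" "HOL-Computational_Algebra.Field_as_Ring" "HOL-Computational_Algebra.Euclidean_Algorithm"
begin


lemma fst_tr: "fst (tr T x) = (\<lambda>v. v + x) ` fst T"
  by (simp add: tr_def)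

lemma tr_tr: "tr (tr T a) b = tr T (a + b)"
  by (simp add: tr_def image_image add.assoc)

lemma tr_0: "tr T 0 = T"
  by (simp add: tr_def)

lemma transl_eq_imp:
  fixes S :: "(real^'n) set"
  assumes "compact S" "S \<noteq> {}" "(\<lambda>v. v + d) ` S = S"
  shows "d = 0"
proof -
  have "continuous_on S (\<lambda>v. v \<bullet> d)" by (intro continuous_intros)
  then obtain s where s: "s \<in> S" "\<And>t. t \<in> S \<Longrightarrow> t \<bullet> d \<le> s \<bullet> d"
    using continuous_attains_sup[OF assms(1,2)] by blast
  have "s + d \<in> S" using s(1) assms(3) by blast
  then have "(s + d) \<bullet> d \<le> s \<bullet> d" by (rule s(2))
  then have "d \<bullet> d \<le> 0" by (simp add: inner_add_left)
  then show ?thesis by (metis inner_eq_zero_iff inner_ge_zero order_antisym)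
qed

lemma tr_inj:
  assumes "is_tile P" "tr P a = tr P b"
  shows "a = b"
proof -
  have c: "compact (fst P)" "fst P \<noteq> {}" using assms(1) by (auto simp: is_tile_def)
  have "(\<lambda>v. v + a) ` fst P = (\<lambda>v. v + b) ` fst P" using assms(2) by (simp add: tr_def)
  then have "(\<lambda>v. v + (a - b)) ` fst P = fst P"
  proof -
    assume h: "(\<lambda>v. v + a) ` fst P = (\<lambda>v. v + b) ` fst P"
    have "(\<lambda>v. v - b) ` ((\<lambda>v. v + a) ` fst P) = (\<lambda>v. v - b) ` ((\<lambda>v. v + b) ` fst P)" using h by simp
    then show ?thesis by (simp add: image_image algebra_simps)
  qed
  from transl_eq_imp[OF c this] show ?thesis by simp
qed

lemma tr_inj_on: "is_tile P \<Longrightarrow> inj (tr P)"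
  by (meson injI tr_inj)

lemma sep_bounded_finite:
  fixes S :: "(real^'n) set"
  assumes "bounded S" "e > 0" "\<And>x y. x \<in> S \<Longrightarrow> y \<in> S \<Longrightarrow> x \<noteq> y \<Longrightarrow> dist x y \<ge> e"
  shows "finite S"
proof (rule ccontr)
  assume "infinite S"
  then obtain z where z: "z islimpt S"
    using bounded_infinite_imp_islimpt[OF subset_refl assms(1)] by blast
  obtain y1 where y1: "y1 \<in> S" "y1 \<noteq> z" "dist y1 z < e/2"
    using z unfolding islimpt_approachable using assms(2) by (meson half_gt_zero)
  have "dist y1 z > 0" using y1 by simp
  then obtain y2 where y2: "y2 \<in> S" "y2 \<noteq> z" "dist y2 z < min (e/2) (dist y1 z)"
    using z unfolding islimpt_approachable using assms(2) by (metis min_less_iff_conj half_gt_zero)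
  have "y1 \<noteq> y2" using y2 by auto
  have "dist y1 y2 < e" using y1 y2 dist_triangle_half_r[of z] by (smt (verit) dist_commute dist_triangle)
  then show False using assms(3)[OF y1(1) y2(1) \<open>y1 \<noteq> y2\<close>] by simp
qed

lemma loc_fin:
  assumes patch: "is_patch TT" and tile: "is_tile P"
  shows "finite {y. tr P y \<in> TT \<and> norm y \<le> R}"
proof -
  have "interior (fst P) \<noteq> {}"
    using tile by (auto simp: is_tile_def)
  then obtain c where "c \<in> interior (fst P)" by blast
  then obtain e where e: "e > 0" "ball c e \<subseteq> interior (fst P)"
    by (meson open_contains_ball open_interior)
  have int_tr: "interior (fst (tr P y)) = (\<lambda>v. v + y) ` interior (fst P)" for y
  proof -
    have "(\<lambda>v. v + y) = (+) y" by (auto simp: add.commute)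
    then show ?thesis by (metis fst_tr interior_translation)
  qed
  show ?thesis
  proof (rule sep_bounded_finite[where e=e])
    show "bounded {y. tr P y \<in> TT \<and> norm y \<le> R}"
      by (rule bounded_subset[of "cball 0 R"]) auto
    show "e > 0" by fact
    fix y y' assume yy: "y \<in> {y. tr P y \<in> TT \<and> norm y \<le> R}" "y' \<in> {y. tr P y \<in> TT \<and> norm y \<le> R}" "y \<noteq> y'"
    show "dist y y' \<ge> e"
    proof (rule ccontr)
      assume "\<not> dist y y' \<ge> e"
      then have d: "dist y y' < e" by simp
      have ne: "tr P y \<noteq> tr P y'" using tr_inj[OF tile] yy(3) by blast
      have "c + y \<in> interior (fst (tr P y))" unfolding int_tr
        using e by (auto intro!: image_eqI[where x=c])
      moreover have "c + y \<in> interior (fst (tr P y'))" unfolding int_tr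
      proof (rule image_eqI[where x="c + y - y'"])
        show "c + y = c + y - y' + y'" by simp
        have "dist c (c + y - y') = dist y y'" by (simp add: dist_norm norm_minus_commute algebra_simps)
        then show "c + y - y' \<in> interior (fst P)" using e d by auto
      qed
      ultimately show False using patch yy ne unfolding is_patch_def by blast
    qed
  qed
qed



abbreviation rc :: "rat poly \<Rightarrow> complex poly" where "rc \<equiv> map_poly of_rat"

lemma rc_mult: "rc (a * b) = rc a * rc b"
  by (rule poly_eqI) (simp add: coeff_map_poly coeff_mult of_rat_sum of_rat_mult)

lemma rc_add: "rc (a + b) = rc a + rc b"
  by (rule poly_eqI) (simp add: coeff_map_poly of_rat_add)

lemma irr_dvd:
  fixes p r :: "rat poly"
  assumes irr: "irreducible p" and r: "r \<noteq> 0"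
    and pc: "poly (rc p) c = 0" and rc: "poly (rc r) c = 0"
  shows "p dvd r"
proof -
  define d where "d = gcd p r"
  obtain a b where ab: "a * p + b * r = d"
    using bezout_coefficients_fst_snd[of p r] unfolding d_def by blast
  have "poly (rc d) c = 0"
    unfolding ab[symmetric] rc_add rc_mult using pc rc by simp
  have "d dvd p" unfolding d_def by simp
  then have "p dvd d \<or> is_unit d" using irr by (simp add: irreducible_altdef)
  moreover have "\<not> is_unit d"
  proof
    assume "is_unit d"
    then obtain e where e: "d = [:e:]" "e \<noteq> 0" by (metis is_unit_poly_iff not_is_unit_0)
    have "poly (rc d) c = of_rat e" using e by (simp add: map_poly_pCons)
    with \<open>poly (rc d) c = 0\<close> e show False by simp
  qed
  ultimately have "p dvd d" by blast
  also have "d dvd r" unfolding d_def by simp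
  finally show ?thesis .
qed



definition cv :: "real^'n \<Rightarrow> complex^'n" where "cv v = (\<chi> i. of_real (v$i))"

lemma cv_add: "cv (a + b) = cv a + cv b" by (simp add: cv_def vec_eq_iff)
lemma cv_scaleR: "cv (c *\<^sub>R a) = of_real c *s cv a" by (simp add: cv_def vec_eq_iff)
lemma cv_zero_iff: "cv a = 0 \<longleftrightarrow> a = 0" by (simp add: cv_def vec_eq_iff)
lemma cv_0: "cv 0 = 0" by (simp add: cv_def vec_eq_iff)
lemma of_real_of_rat_c: "(of_real (of_rat q) :: complex) = of_rat q"
  by (induct q) (simp add: of_rat_rat)
lemma cv_sum: "cv (sum f S) = sum (\<lambda>j. cv (f j)) S"
  by (induction S rule: infinite_finite_induct) (auto simp: cv_add cv_0)

lemma cv_mult: "cv (Q *v v) = cmat Q *v cv v"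
  by (simp add: cv_def cmat_def vec_eq_iff matrix_vector_mult_def)

lemma diag_mult:
  assumes "\<forall>i j. i \<noteq> j \<longrightarrow> D $ i $ j = 0"
  shows "D *v e = (\<chi> i. D$i$i * e$i)"
proof -
  have "(\<Sum>j\<in>UNIV. D $ i $ j * e $ j) = D$i$i * e$i" for i
    using assms by (subst sum.remove[of _ i]) auto
  then show ?thesis by (simp add: matrix_vector_mult_def vec_eq_iff)
qed

lemma mv_scale: "(A::complex^'n^'m) *v (c *s e) = c *s (A *v e)"
  by (simp add: matrix_vector_mult_def vec_eq_iff sum_distrib_left mult.left_commute)

lemma mv_sum: "(A::'a::comm_semiring_1^'n^'m) *v sum f S = sum (\<lambda>j. A *v f j) S"
  by (induction S rule: infinite_finite_induct) (auto simp: matrix_vector_right_distrib)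

definition QQ :: "real^'n^'n \<Rightarrow> nat \<Rightarrow> real^'n \<Rightarrow> real^'n" where
  "QQ Q j = ((\<lambda>w. Q *v w) ^^ j)"

lemma QQ_add: "QQ Q j (a + b) = QQ Q j a + QQ Q j b"
  by (induction j) (auto simp: QQ_def matrix_vector_right_distrib)
lemma QQ_scaleR: "QQ Q j (c *\<^sub>R a) = c *\<^sub>R QQ Q j a"
  by (induction j) (auto simp: QQ_def matrix_vector_mult_scaleR)
lemma QQ_Suc: "QQ Q (Suc j) v = QQ Q j (Q *v v)"
  by (simp add: QQ_def funpow_Suc_right del: funpow.simps)
lemma QQ_0: "QQ Q 0 v = v" by (simp add: QQ_def)

definition pe :: "real^'n^'n \<Rightarrow> rat poly \<Rightarrow> real^'n \<Rightarrow> real^'n" where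
  "pe Q r v = (\<Sum>j<Suc (degree r). of_rat (coeff r j) *\<^sub>R QQ Q j v)"

lemma poly_det: "poly (det (M::complex poly^'n::finite^'n)) c = det (\<chi> i j. poly (M$i$j) c)"
  unfolding det_def by (simp add: poly_sum poly_prod)

lemma poly_charpoly: "poly (charpoly (Q::real^'n::finite^'n)) c = det (mat c - cmat Q)"
proof -
  have "(\<chi> i j. poly (((\<chi> i j. (if i = j then [:0, 1:] else 0) - [: cmat Q $ i $ j :]) :: complex poly^'n^'n)$i$j) c)
        = mat c - cmat Q"
    by (simp add: vec_eq_iff mat_def)
  then show ?thesis unfolding charpoly_def poly_det by simp
qed

lemma det_zero_if_kernel:
  fixes A :: "complex^'n::finite^'n"
  assumes "A *v w = 0" "w \<noteq> 0"
  shows "det A = 0"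
proof -
  have "\<not> inj ((*v) A)"
    using assms by (metis inj_eq matrix_vector_mult_0_right)
  then show ?thesis
    using det_nz_iff_inj_gen[of "(*v) A"] by simp
qed

lemma mat_mv: "(mat c :: complex^'n^'n) *v w = c *s w"
proof -
  have "(\<Sum>j\<in>UNIV. (if i = j then c else 0) * w $ j) = c * w$i" for i
    by (subst sum.remove[of _ i]) auto
  then show ?thesis by (simp add: matrix_vector_mult_def mat_def vec_eq_iff)
qed

locale diagQ =
  fixes Q :: "real^'n::finite^'n" and P D Pi :: "complex^'n^'n"
  assumes PPi: "P ** Pi = mat 1" and PiP: "Pi ** P = mat 1"
    and Ddiag: "\<forall>i j. i \<noteq> j \<longrightarrow> D $ i $ j = 0"
    and CQ: "cmat Q = P ** D ** Pi"
begin

lemma P_Pi: "P *v (Pi *v w) = w"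
  by (simp add: matrix_vector_mul_assoc PPi)
lemma Pi_P: "Pi *v (P *v w) = w"
  by (simp add: matrix_vector_mul_assoc PiP)

lemma CP: "cmat Q *v (P *v e) = P *v (\<chi> i. D$i$i * e$i)"
proof -
  have "cmat Q *v (P *v e) = P *v (D *v (Pi *v (P *v e)))"
    by (simp add: CQ matrix_vector_mul_assoc matrix_mul_assoc)
  also have "\<dots> = P *v (D *v e)" by (simp add: Pi_P)
  finally show ?thesis by (simp add: diag_mult[OF Ddiag])
qed

lemma cv_QQ: "cv (QQ Q j v) = P *v (\<chi> i. (D$i$i)^j * (Pi *v cv v)$i)"
proof (induction j)
  case 0
  then show ?case by (simp add: QQ_0 P_Pi)
next
  case (Suc j)
  have "cv (QQ Q (Suc j) v) = cv (Q *v QQ Q j v)" by (simp add: QQ_def)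
  also have "\<dots> = cmat Q *v cv (QQ Q j v)" by (rule cv_mult)
  also have "\<dots> = P *v (\<chi> i. (D$i$i)^(Suc j) * (Pi *v cv v)$i)"
    unfolding Suc CP by (simp add: mult.assoc)
  finally show ?case .
qed

lemma cv_pe: "cv (pe Q r v) = P *v (\<chi> i. poly (rc r) (D$i$i) * (Pi *v cv v)$i)"
proof -
  have "cv (pe Q r v) = (\<Sum>j<Suc (degree r). of_rat (coeff r j) *s cv (QQ Q j v))"
    unfolding pe_def cv_sum cv_scaleR of_real_of_rat_c ..
  also have "\<dots> = (\<Sum>j<Suc (degree r). P *v (\<chi> i. (of_rat (coeff r j) * (D$i$i)^j) * (Pi *v cv v)$i))"
  proof (rule sum.cong)
    fix j
    have "(\<chi> i. (of_rat (coeff r j) * (D$i$i)^j) * (Pi *v cv v)$i) = of_rat (coeff r j) *s (\<chi> i. (D$i$i)^j * (Pi *v cv v)$i)"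
      by (simp add: vec_eq_iff mult.assoc)
    then show "of_rat (coeff r j) *s cv (QQ Q j v) = P *v (\<chi> i. (of_rat (coeff r j) * (D$i$i)^j) * (Pi *v cv v)$i)"
      by (simp add: cv_QQ mv_scale)
  qed simp
  also have "\<dots> = P *v (\<Sum>j<Suc (degree r). (\<chi> i. (of_rat (coeff r j) * (D$i$i)^j) * (Pi *v cv v)$i))"
    by (simp only: mv_sum)
  also have "(\<Sum>j<Suc (degree r). (\<chi> i. (of_rat (coeff r j) * (D$i$i)^j) * (Pi *v cv v)$i))
      = (\<chi> i. poly (rc r) (D$i$i) * (Pi *v cv v)$i)"
    by (simp add: vec_eq_iff poly_altdef degree_map_poly coeff_map_poly sum_distrib_right atMost_atLeast0 lessThan_Suc_atMost)
  finally show ?thesis .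
qed

lemma eig_D: "eigenvalue Q (D$i$i)"
proof -
  define w where "w = P *v axis i 1"
  have w0: "w \<noteq> 0"
  proof
    assume "w = 0"
    then have "Pi *v w = 0" by simp
    then show False unfolding w_def Pi_P by (simp add: axis_eq_0_iff)
  qed
  have ax: "(\<chi> j. D$j$j * (axis i 1 :: complex^'n)$j) = D$i$i *s axis i 1"
    by (simp add: vec_eq_iff axis_def)
  have "cmat Q *v w = D$i$i *s w"
    unfolding w_def CP ax mv_scale ..
  then have "(mat (D$i$i) - cmat Q) *v w = 0"
    by (simp add: matrix_vector_mult_diff_rdistrib mat_mv)
  then show ?thesis
    unfolding eigenvalue_def poly_charpoly using det_zero_if_kernel w0 by blast
qed

end

context diagQ begin
lemma shrink:
  assumes D1: "\<forall>i. cmod (D$i$i) > 1" and a: "\<And>n. Q *v a (Suc n) = a n"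
  shows "\<exists>n. norm (a n) \<le> 1"
proof -
  define e where "e n = Pi *v cv (a n)" for n
  have cva: "cv (a n) = P *v e n" for n by (simp add: e_def P_Pi)
  have step: "e n = (\<chi> i. D$i$i * e (Suc n) $ i)" for n
  proof -
    have "cv (a n) = P *v (\<chi> i. D$i$i * e (Suc n) $ i)"
      using cv_mult[of Q "a (Suc n)"] unfolding a cva CP .
    then show ?thesis unfolding e_def by (simp add: Pi_P)
  qed
  have Dnz: "D$i$i \<noteq> 0" for i
  proof
    assume "D$i$i = 0"
    with D1[rule_format, of i] show False by simp
  qed
  have en: "e n $ i = e 0 $ i * (inverse (D$i$i))^n" for n i
  proof (induction n)
    case (Suc n)
    have "e n $ i = D$i$i * e (Suc n) $ i" by (subst step[of n]) simp
    then have "e (Suc n) $ i = e n $ i * inverse (D$i$i)" using Dnz[of i] by (simp add: field_simps)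
    then show ?case using Suc by (simp only: power_Suc2 mult.assoc)
  qed simp
  have e0: "(\<lambda>n. e n $ i) \<longlonglongrightarrow> 0" for i
  proof -
    have "norm (inverse (D$i$i)) < 1" using D1[rule_format, of i] by (simp add: norm_inverse inverse_less_1_iff)
    then have "(\<lambda>n. (inverse (D$i$i))^n) \<longlonglongrightarrow> 0" by (rule LIMSEQ_power_zero)
    then have "(\<lambda>n. e 0 $ i * (inverse (D$i$i))^n) \<longlonglongrightarrow> 0" by (rule tendsto_mult_right_zero)
    moreover have "(\<lambda>n. e n $ i) = (\<lambda>n. e 0 $ i * (inverse (D$i$i))^n)" by (rule ext) (rule en)
    ultimately show ?thesis by simp
  qed
  have c0: "(\<lambda>n. cv (a n) $ j) \<longlonglongrightarrow> 0" for j
    unfolding cva matrix_vector_mult_def vec_lambda_beta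
    by (intro tendsto_null_sum tendsto_mult_right_zero e0)
  have "(\<lambda>n. \<Sum>j\<in>UNIV. norm (cv (a n) $ j)) \<longlonglongrightarrow> 0"
    by (intro tendsto_null_sum tendsto_norm_zero c0)
  then have "eventually (\<lambda>n. (\<Sum>j\<in>UNIV. norm (cv (a n) $ j)) < 1) sequentially"
    by (rule order_tendstoD) (rule zero_less_one)
  then obtain n where n: "(\<Sum>j\<in>UNIV. norm (cv (a n) $ j)) < 1"
    by (meson eventually_sequentially order_refl)
  have "norm (a n) \<le> (\<Sum>j\<in>UNIV. \<bar>a n $ j\<bar>)" by (rule norm_le_l1_cart)
  also have "\<dots> = (\<Sum>j\<in>UNIV. norm (cv (a n) $ j))" by (simp add: cv_def)
  finally have "norm (a n) \<le> 1" using n by linarith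
  then show ?thesis by blast
qed

end


lemma pe_N:
  assumes "degree r < N"
  shows "pe Q r v = (\<Sum>j<N. of_rat (coeff r j) *\<^sub>R QQ Q j v)"
  unfolding pe_def
  by (rule sum.mono_neutral_left) (use assms in \<open>auto simp: coeff_eq_0\<close>)

lemma QQ_zero: "QQ Q j 0 = 0"
  by (induction j) (simp_all add: QQ_def)

lemma QQ_sum: "QQ Q j (sum f S) = (\<Sum>i\<in>S. QQ Q j (f i))"
  by (induction S rule: infinite_finite_induct) (auto simp: QQ_add QQ_zero)

interpretation RV: vector_space_pair "\<lambda>r v. (of_rat r *\<^sub>R (v::real^'n::finite))" "\<lambda>r (t::real). of_rat r * t"
  by unfold_locales (auto simp: of_rat_add of_rat_mult scaleR_add_right scaleR_add_left distrib_left distrib_right)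

lemma lin_props:
  assumes "Vector_Spaces.linear (\<lambda>r v. (of_rat r *\<^sub>R (v::real^'n::finite))) (\<lambda>r (t::real). of_rat r * t) g"
  shows "g (a + b) = g a + g b" "g (of_rat r *\<^sub>R a) = of_rat r * g a"
  using assms unfolding Vector_Spaces.linear_iff_module_hom 
  by (auto simp: module_hom.add dest: module_hom.scale[where r=r and b=a])

lemma lin_sum:
  assumes "Vector_Spaces.linear (\<lambda>r v. (of_rat r *\<^sub>R (v::real^'n::finite))) (\<lambda>r (t::real). of_rat r * t) g"
  shows "g (sum f S) = (\<Sum>i\<in>S. g (f i))"
  using assms unfolding Vector_Spaces.linear_iff_module_hom by (rule module_hom.sum)

context diagQ
begin

lemma pe_root_zero:
  assumes "\<forall>i. poly (rc r) (D$i$i) = 0"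
  shows "pe Q r v = 0"
proof -
  have "cv (pe Q r v) = 0" unfolding cv_pe using assms by (simp add: vec_eq_iff matrix_vector_mult_def)
  then show ?thesis by (simp add: cv_zero_iff)
qed

lemma pe_nonzero:
  assumes irr: "irreducible p" and roots: "\<forall>i. poly (rc p) (D$i$i) = 0"
    and r: "r \<noteq> 0" "degree r < degree p" and x: "x \<noteq> 0"
  shows "pe Q r x \<noteq> 0"
proof
  assume "pe Q r x = 0"
  then have "P *v (\<chi> i. poly (rc r) (D$i$i) * (Pi *v cv x)$i) = 0" using cv_pe[of r x] by (simp add: cv_0)
  then have z: "(\<chi> i. poly (rc r) (D$i$i) * (Pi *v cv x)$i) = 0" by (metis Pi_P matrix_vector_mult_0_right)
  have "Pi *v cv x \<noteq> 0"
  proof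
    assume "Pi *v cv x = 0"
    then have "cv x = 0" by (metis P_Pi matrix_vector_mult_0_right)
    then show False using x by (simp add: cv_zero_iff)
  qed
  then obtain i where i: "(Pi *v cv x)$i \<noteq> 0" by (auto simp: vec_eq_iff)
  have "poly (rc r) (D$i$i) = 0" using z i by (auto simp: vec_eq_iff)
  then have "p dvd r" using irr_dvd[OF irr r(1)] roots by blast
  then have "degree p \<le> degree r" using r(1) by (simp add: dvd_imp_degree_le)
  then show False using r(2) by simp
qed

lemma lin_indep:
  assumes irr: "irreducible p" and roots: "\<forall>i. poly (rc p) (D$i$i) = 0"
    and x: "x \<noteq> 0" and k: "k = degree p" and sum0: "(\<Sum>j<k. of_rat (c j) *\<^sub>R QQ Q j x) = 0"
  shows "\<forall>j<k. c j = 0"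
proof -
  define r where "r = (\<Sum>j<k. monom (c j) j)"
  have cr: "coeff r j = (if j < k then c j else 0)" for j
    unfolding r_def by (simp add: coeff_sum)
  have "k > 0"
  proof (rule ccontr)
    assume "\<not> k > 0"
    then have "degree p = 0" using k by simp
    then obtain a where "p = [:a:]" by (metis degree_eq_zeroE)
    then show False using irr roots
      by (metis irreducible_not_unit is_unit_poly_iff coeff_pCons_0 map_poly_pCons of_rat_eq_0_iff 
          poly_pCons mult_zero_left add_0_right pCons_0_0 irreducible_def map_poly_0 is_unit_iff_degree
          degree_pCons_0)
  qed
  have dr: "degree r < k"
  proof -
    have "degree r \<le> k - 1" by (rule degree_le) (use \<open>k > 0\<close> in \<open>auto simp: cr\<close>)
    then show ?thesis using \<open>k > 0\<close> by simp
  qed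
  have "pe Q r x = (\<Sum>j<k. of_rat (coeff r j) *\<^sub>R QQ Q j x)" by (rule pe_N[OF dr])
  also have "\<dots> = 0" using sum0 by (simp add: cr)
  finally have "r = 0" using pe_nonzero[OF irr roots _ _ x] dr k by blast
  then show ?thesis using cr by (metis coeff_0)
qed

lemma deg_pos:
  assumes irr: "irreducible p" and pb: "poly (rc p) b = 0"
  shows "degree p > 0"
proof (rule ccontr)
  assume "\<not> degree p > 0"
  then have "degree p = 0" by simp
  then obtain a where a: "p = [:a:]" by (metis degree_eq_zeroE)
  then have "a \<noteq> 0" using irr by auto
  then show False using pb a by (simp add: map_poly_pCons)
qed

lemma QQ_inj:
  assumes irr: "irreducible p" and roots: "\<forall>i. poly (rc p) (D$i$i) = 0"
    and x: "x \<noteq> 0"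
  shows "inj_on (\<lambda>j. QQ Q j x) {..<degree p}"
proof (rule inj_onI, rule ccontr)
  fix i j assume ij: "i \<in> {..<degree p}" "j \<in> {..<degree p}" "QQ Q i x = QQ Q j x" "i \<noteq> j"
  define c where "c l = (if l = i then 1 else if l = j then -1 else (0::rat))" for l
  have "(\<Sum>l<degree p. of_rat (c l) *\<^sub>R QQ Q l x) = of_rat (c i) *\<^sub>R QQ Q i x + (\<Sum>l\<in>{..<degree p}-{i}. of_rat (c l) *\<^sub>R QQ Q l x)"
    by (rule sum.remove) (use ij in auto)
  also have "(\<Sum>l\<in>{..<degree p}-{i}. of_rat (c l) *\<^sub>R QQ Q l x) = of_rat (c j) *\<^sub>R QQ Q j x + (\<Sum>l\<in>{..<degree p}-{i}-{j}. of_rat (c l) *\<^sub>R QQ Q l x)"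
    by (rule sum.remove) (use ij in auto)
  also have "(\<Sum>l\<in>{..<degree p}-{i}-{j}. of_rat (c l) *\<^sub>R QQ Q l x) = 0"
    by (rule sum.neutral) (auto simp: c_def)
  finally have "(\<Sum>l<degree p. of_rat (c l) *\<^sub>R QQ Q l x) = 0" using ij by (simp add: c_def)
  from lin_indep[OF irr roots x refl this] ij show False by (auto simp: c_def)
qed

lemma QQ_indep:
  assumes irr: "irreducible p" and roots: "\<forall>i. poly (rc p) (D$i$i) = 0"
    and x: "x \<noteq> 0"
  shows "RV.vs1.independent ((\<lambda>j. QQ Q j x) ` {..<degree p})"
proof
  let ?f = "\<lambda>j. QQ Q j x"
  assume "RV.vs1.dependent (?f ` {..<degree p})"
  then obtain u where u: "\<exists>v\<in>?f ` {..<degree p}. u v \<noteq> 0" "(\<Sum>v\<in>?f ` {..<degree p}. of_rat (u v) *\<^sub>R v) = 0"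
    using RV.vs1.dependent_finite[of "?f ` {..<degree p}"] by auto
  have "(\<Sum>j<degree p. of_rat (u (?f j)) *\<^sub>R ?f j) = 0"
    using u(2) by (simp add: sum.reindex[OF QQ_inj[OF irr roots x]])
  from lin_indep[OF irr roots x refl this] u(1) show False by auto
qed

lemma psi_exists:
  assumes irr: "irreducible p" and roots: "\<forall>i. poly (rc p) (D$i$i) = 0"
    and pb: "poly (rc p) \<beta> = 0" and p0: "coeff p 0 \<noteq> 0" and x: "x \<noteq> 0"
  shows "\<exists>\<psi>. (\<forall>u v. \<psi> (u + v) = \<psi> u + \<psi> v) \<and> (\<forall>v. \<psi> (Q *v v) = \<beta> * \<psi> v) \<and> \<psi> x \<noteq> 0"
proof -
  define k where "k = degree p"
  have k0: "k > 0" using deg_pos[OF irr pb] k_def by simp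
  let ?f = "\<lambda>j. QQ Q j x"
  obtain g where g: "Vector_Spaces.linear (\<lambda>r v. (of_rat r *\<^sub>R (v::real^'n))) (\<lambda>r (t::real). of_rat r * t) g"
    "\<forall>v\<in>?f ` {..<k}. g v = (if v = x then 1 else 0)"
    using RV.linear_independent_extend[OF QQ_indep[OF irr roots x], of "\<lambda>v. if v = x then 1 else 0"] unfolding k_def by blast
  have gf: "g (?f j) = (if j = 0 then 1 else 0)" if "j < k" for j
  proof -
    have "?f j = x \<longleftrightarrow> j = 0"
      using inj_onD[OF QQ_inj[OF irr roots x], of j 0] that k0 k_def by (auto simp: QQ_0)
    then show ?thesis using g(2) that by auto
  qed
  have "[:-\<beta>, 1:] dvd rc p" using pb by (simp add: poly_eq_0_iff_dvd)
  then obtain q where q: "rc p = [:-\<beta>, 1:] * q" by (elim dvdE)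
  have drc: "degree (rc p) = k" unfolding k_def by (simp add: degree_map_poly)
  have "rc p \<noteq> 0" using drc k0 by auto
  then have qnz: "q \<noteq> 0" using q by auto
  have "degree ([:-\<beta>, 1:] * q) = degree [:-\<beta>, 1:] + degree q" using qnz by (intro degree_mult_eq) auto
  then have dq: "degree q = k - 1" using drc q by simp
  have qk: "coeff q j = 0" if "j \<ge> k" for j using dq that k0 by (intro coeff_eq_0) simp
  have c0: "coeff (rc p) 0 = - \<beta> * coeff q 0" unfolding q by simp
  have cS: "coeff (rc p) (Suc j) = coeff q j - \<beta> * coeff q (Suc j)" for j unfolding q by simp
  have "coeff (rc p) 0 \<noteq> 0" using p0 by (simp add: coeff_map_poly)
  then have q0: "coeff q 0 \<noteq> 0" using c0 by auto
  define \<psi> where "\<psi> v = (\<Sum>j<k. coeff q j * of_real (g (QQ Q j v)))" for v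
  have add: "\<psi> (u + v) = \<psi> u + \<psi> v" for u v
    unfolding \<psi>_def by (simp add: QQ_add lin_props(1)[OF g(1)] distrib_left sum.distrib)
  have eqv: "\<psi> (Q *v v) = \<beta> * \<psi> v" for v
  proof -
    define h where "h j = (of_real (g (QQ Q j v)) :: complex)" for j
    have "0 = (of_real (g (pe Q p v)) :: complex)" using pe_root_zero[OF roots] by (simp add: lin_props(2)[OF g(1), of 0 0, simplified])
    also have "\<dots> = (\<Sum>j<Suc k. coeff (rc p) j * h j)"
      unfolding pe_def k_def[symmetric] lin_sum[OF g(1)] lin_props(2)[OF g(1)] h_def
      by (simp add: coeff_map_poly of_real_of_rat_c del: sum.lessThan_Suc)
    also have "\<dots> = coeff (rc p) 0 * h 0 + (\<Sum>j<k. coeff (rc p) (Suc j) * h (Suc j))"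
      by (rule sum.lessThan_Suc_shift)
    also have "\<dots> = (\<Sum>j<k. coeff q j * h (Suc j)) - \<beta> * (\<Sum>j<Suc k. coeff q j * h j)"
      unfolding c0 cS sum.lessThan_Suc_shift[of "\<lambda>j. coeff q j * h j"]
      by (simp add: algebra_simps sum_subtractf sum_distrib_left)
    also have "(\<Sum>j<Suc k. coeff q j * h j) = \<psi> v"
      by (simp add: qk \<psi>_def h_def)
    also have "(\<Sum>j<k. coeff q j * h (Suc j)) = \<psi> (Q *v v)"
      by (simp add: \<psi>_def h_def QQ_Suc)
    finally show ?thesis by simp
  qed
  have "\<psi> x = (\<Sum>j<k. coeff q j * (if j = 0 then 1 else 0))"
    unfolding \<psi>_def by (rule sum.cong) (auto simp: gf)
  also have "\<dots> = (\<Sum>j<k. if j = 0 then coeff q 0 else 0)" by (rule sum.cong) auto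
  also have "\<dots> = coeff q 0" using k0 by (simp add: sum.delta)
  finally have "\<psi> x \<noteq> 0" using q0 by simp
  then show ?thesis using add eqv by blast
qed

end



lemma psi_bound:
  fixes \<psi> :: "real^'n::finite \<Rightarrow> complex" and S3 :: "('p \<times> (real^'n) \<times> (real^'n)) set"
  assumes add: "\<And>u v. \<psi> (u + v) = \<psi> u + \<psi> v"
    and eqv: "\<And>v. \<psi> (Q *v v) = \<beta> * \<psi> v" and b1: "cmod \<beta> < 1"
    and Dg: "finite Dg"
    and parent: "\<And>P y a. (P, y, a) \<in> S3 \<Longrightarrow> \<exists>P' y' a'. (P', y', a') \<in> S3 \<and> y - Q *v y' \<in> Dg \<and> a = Q *v a'"
    and shrink: "\<And>a. (\<And>n. Q *v a (Suc n) = a n) \<Longrightarrow> \<exists>n. norm (a n) \<le> 1"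
    and R: "\<And>P y a. (P, y, a) \<in> S3 \<Longrightarrow> norm (a - y) \<le> R"
    and F: "finite {y. \<exists>P a. (P, y, a) \<in> S3 \<and> norm y \<le> R + 1}"
  shows "\<exists>B. \<forall>P y a. (P, y, a) \<in> S3 \<longrightarrow> cmod (\<psi> y) \<le> B"
proof -
  define Fs where "Fs = {y. \<exists>P a. (P, y, a) \<in> S3 \<and> norm y \<le> R + 1}"
  define M0 where "M0 = (\<Sum>y\<in>Fs. cmod (\<psi> y))"
  define M1 where "M1 = (\<Sum>t\<in>Dg. cmod (\<psi> t))"
  have M1: "M1 \<ge> 0" unfolding M1_def by (simp add: sum_nonneg)
  have M0: "M0 \<ge> 0" unfolding M0_def by (simp add: sum_nonneg)
  define r where "r = cmod \<beta>"
  have r: "0 \<le> r" "r < 1" using b1 by (auto simp: r_def)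
  have psi0: "\<psi> 0 = 0" using add[of 0 0] by simp
  have psid: "\<psi> (u - v) = \<psi> u - \<psi> v" for u v using add[of "u - v" v] by (simp add: algebra_simps)
  show ?thesis
  proof (intro exI allI impI)
    fix P0 y0 a0 assume s0: "(P0, y0, a0) \<in> S3"
    define nxt where "nxt (s::'p \<times> (real^'n) \<times> (real^'n)) = (SOME s'. s' \<in> S3 \<and> fst (snd s) - Q *v fst (snd s') \<in> Dg \<and> snd (snd s) = Q *v snd (snd s'))" for s
    have nxt: "nxt s \<in> S3 \<and> fst (snd s) - Q *v fst (snd (nxt s)) \<in> Dg \<and> snd (snd s) = Q *v snd (snd (nxt s))" if "s \<in> S3" for s
    proof -
      obtain P y a where s: "s = (P, y, a)" by (cases s) auto
      from parent[of P y a] that s obtain P' y' a' where "(P', y', a') \<in> S3 \<and> y - Q *v y' \<in> Dg \<and> a = Q *v a'" by auto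
      then have "\<exists>s'. s' \<in> S3 \<and> fst (snd s) - Q *v fst (snd s') \<in> Dg \<and> snd (snd s) = Q *v snd (snd s')"
        using s by (intro exI[of _ "(P', y', a')"]) auto
      then show ?thesis unfolding nxt_def by (rule someI_ex)
    qed
    define ch where "ch n = (nxt ^^ n) (P0, y0, a0)" for n
    have chS: "ch n \<in> S3" for n by (induction n) (auto simp: ch_def s0 nxt)
    have chS': "ch (Suc n) = nxt (ch n)" for n by (simp add: ch_def)
    define ys where "ys n = fst (snd (ch n))" for n
    define as where "as n = snd (snd (ch n))" for n
    define t where "t n = ys n - Q *v ys (Suc n)" for n
    have tD: "t n \<in> Dg" for n unfolding t_def ys_def chS' using nxt[OF chS[of n]] by simp
    have aQ: "Q *v as (Suc n) = as n" for n unfolding as_def chS' using nxt[OF chS[of n]] by simp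
    have ys0: "ys 0 = y0" by (simp add: ys_def ch_def)
    have expand: "\<psi> y0 = \<beta>^n * \<psi> (ys n) + (\<Sum>j<n. \<beta>^j * \<psi> (t j))" for n
    proof (induction n)
      case 0 then show ?case by (simp add: ys0)
    next
      case (Suc n)
      have "ys n = t n + Q *v ys (Suc n)" by (simp add: t_def)
      then have "\<psi> (ys n) = \<psi> (t n) + \<beta> * \<psi> (ys (Suc n))" by (simp add: add eqv)
      then show ?case using Suc by (simp add: algebra_simps)
    qed
    obtain n where n: "norm (as n) \<le> 1" using shrink[of as] aQ by blast
    have "norm (as n - ys n) \<le> R" using R[of "fst (ch n)" "ys n" "as n"] chS[of n] by (simp add: ys_def as_def)
    then have "norm (ys n) \<le> R + 1" using n norm_triangle_ineq4[of "as n" "ys n"] by (smt (verit) norm_minus_commute norm_triangle_sub)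
    then have "ys n \<in> Fs" unfolding Fs_def ys_def using chS[of n] by (metis (mono_tags, lifting) mem_Collect_eq prod.collapse)
    then have psn: "cmod (\<psi> (ys n)) \<le> M0" unfolding M0_def using F Fs_def by (intro member_le_sum) auto
    have pst: "cmod (\<psi> (t j)) \<le> M1" for j unfolding M1_def using Dg tD[of j] by (intro member_le_sum) auto
    have "cmod (\<psi> y0) \<le> cmod (\<beta>^n * \<psi> (ys n)) + cmod (\<Sum>j<n. \<beta>^j * \<psi> (t j))"
      unfolding expand[of n] by (rule norm_triangle_ineq)
    also have "cmod (\<beta>^n * \<psi> (ys n)) \<le> 1 * M0"
      unfolding norm_mult norm_power r_def[symmetric]
      by (intro mult_mono psn power_le_one) (use r in \<open>auto simp: M0\<close>)
    also have "cmod (\<Sum>j<n. \<beta>^j * \<psi> (t j)) \<le> (\<Sum>j<n. r^j * M1)"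
      by (rule order_trans[OF norm_sum sum_mono]) (use r in \<open>auto simp: norm_mult norm_power r_def[symmetric] intro!: mult_left_mono pst\<close>)
    also have "(\<Sum>j<n. r^j * M1) = (\<Sum>j<n. r^j) * M1" by (simp add: sum_distrib_right)
    also have "(\<Sum>j<n. r^j) \<le> 1 / (1 - r)"
    proof -
      have "(\<Sum>j<n. r^j) = (1 - r^n) / (1 - r)" using r by (simp add: sum_gp_strict)
      also have "\<dots> \<le> 1 / (1 - r)" using r by (intro divide_right_mono) auto
      finally show ?thesis .
    qed
    finally show "cmod (\<psi> y0) \<le> M0 + 1 / (1 - r) * M1" using M1 by (smt (verit) mult_right_mono)
  qed
qed



theorem theorem3p6:
  fixes A :: "('n::finite, 'l) tile set"
    and Q :: "real^'n^'n"
    and \<omega> :: "('n, 'l) tile \<Rightarrow> ('n, 'l) tile set"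
    and \<T> :: "('n, 'l) tile set"
    and J :: nat
  assumes rule: "subst_rule A Q \<omega>"
    and prim: "primitive A \<omega>"
    and flc: "subst_FLC A \<omega>"
    and sat: "self_affine_tiling A Q \<omega> \<T>"
    and diag: "diagonalizable_C Q"
    and conj: "\<forall>z \<mu>. eigenvalue Q z \<and> eigenvalue Q \<mu> \<longrightarrow> alg_conj z \<mu>"
    and mult: "\<forall>z. eigenvalue Q z \<longrightarrow> eig_mult Q z = J"
    and beta: "\<exists>z \<beta>. eigenvalue Q z \<and> alg_conj z \<beta> \<and> cmod \<beta> < 1"
  shows "\<forall>x. return_vector \<T> x \<and> x \<noteq> 0 \<longrightarrow>
           (\<exists>n0::nat. \<forall>n>n0. \<forall>T\<in>\<T>. tr T (real n *\<^sub>R x) \<notin> \<T>) \<and>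
           (\<forall>T\<in>\<T>. \<exists>n0::nat. n0 > 0 \<and>
               \<not> legal \<T> {tr T (real k *\<^sub>R x) | k. 1 \<le> k \<and> k \<le> n0})"
proof (intro allI impI)
  fix x assume hx: "return_vector \<T> x \<and> x \<noteq> 0"
  then have x0: "x \<noteq> 0" by simp
  have finA: "finite A" and tilesA: "\<And>P. P \<in> A \<Longrightarrow> is_tile P" and exp: "expansion Q"
    and omfin: "\<And>P. P \<in> A \<Longrightarrow> finite (\<omega> P)"
    and omsupp: "\<And>P. P \<in> A \<Longrightarrow> supp (\<omega> P) = (\<lambda>v. Q *v v) ` fst P"
    and omtr: "\<And>P y. P \<in> A \<Longrightarrow> \<omega> (tr P y) = tr_patch (\<omega> P) (Q *v y)"
    using rule unfolding subst_rule_def by auto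
  have patch: "is_patch \<T>" and cover: "\<And>T. T \<in> \<T> \<Longrightarrow> \<exists>P\<in>A. \<exists>y. T = tr P y"
    and fixp: "omega_patch \<omega> \<T> = \<T>"
    using sat unfolding self_affine_tiling_def is_tiling_def by auto
  obtain PM D :: "complex^'n^'n" where PM: "invertible PM" and Ddiag: "\<forall>i j. i \<noteq> j \<longrightarrow> D $ i $ j = 0"
    and CQ: "cmat Q = PM ** D ** matrix_inv PM"
    using diag unfolding diagonalizable_C_def by blast
  define Pi where "Pi = matrix_inv PM"
  have "PM ** Pi = mat 1 \<and> Pi ** PM = mat 1"
    using PM unfolding invertible_def Pi_def matrix_inv_def by (rule someI_ex)
  then interpret diagQ Q PM D Pi
    using Ddiag CQ unfolding Pi_def by unfold_locales auto
  obtain z0 \<beta> where z0: "eigenvalue Q z0" and zb: "alg_conj z0 \<beta>" and b1: "cmod \<beta> < 1"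
    using beta by blast
  obtain p where irr: "irreducible p" and pz0: "poly (rc p) z0 = 0" and pb: "poly (rc p) \<beta> = 0"
    using zb unfolding alg_conj_def by blast
  have eig_root: "poly (rc p) \<mu> = 0" if eigm: "eigenvalue Q \<mu>" for \<mu>
  proof -
    obtain p' where irr': "irreducible p'" and p'z: "poly (rc p') z0 = 0" and p'm: "poly (rc p') \<mu> = 0"
      using conj z0 eigm unfolding alg_conj_def by blast
    have "p \<noteq> 0" using irr by auto
    then have "p' dvd p" using irr_dvd[OF irr' _ p'z pz0] by blast
    then obtain s where "p = p' * s" by (elim dvdE)
    then show ?thesis using p'm by (simp add: rc_mult)
  qed
  have roots: "\<forall>i. poly (rc p) (D$i$i) = 0" using eig_root eig_D by blast
  have D1: "\<forall>i. cmod (D$i$i) > 1" using exp eig_D unfolding expansion_def by blast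
  have p0: "coeff p 0 \<noteq> 0"
  proof
    assume c: "coeff p 0 = 0"
    have "poly (rc p) 0 = 0" using c by (simp add: poly_0_coeff_0 coeff_map_poly)
    moreover have "poly (rc [:0, 1:]) 0 = 0" by (simp add: map_poly_pCons)
    ultimately have "p dvd [:0, 1:]" using irr_dvd[OF irr, of "[:0, 1:]" 0] by auto
    then obtain s where s: "[:0, 1:] = p * s" by (elim dvdE)
    have "poly (rc [:0, 1:]) z0 = 0" unfolding s rc_mult using pz0 by simp
    then have "z0 = 0" by (simp add: map_poly_pCons)
    then show False using exp z0 unfolding expansion_def by fastforce
  qed
  obtain \<psi> where add: "\<And>u v. \<psi> (u + v) = \<psi> u + \<psi> v" and eqv: "\<And>v. \<psi> (Q *v v) = \<beta> * \<psi> v"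
    and px: "\<psi> x \<noteq> 0"
    using psi_exists[OF irr roots pb p0 x0] by blast
  define S3 where "S3 = {(P, y, a). P \<in> A \<and> tr P y \<in> \<T> \<and> a \<in> fst (tr P y)}"
  define Dg where "Dg = {t. \<exists>P\<in>A. \<exists>P'\<in>A. tr P t \<in> \<omega> P'}"
  have Dg: "finite Dg"
  proof -
    have "Dg = (\<Union>P\<in>A. \<Union>P'\<in>A. tr P -` \<omega> P')" unfolding Dg_def by blast
    also have "finite \<dots>"
      using finA by (intro finite_UN_I finite_vimageI omfin tr_inj_on tilesA) auto
    finally show ?thesis .
  qed
  have parent: "\<exists>P' y' a'. (P', y', a') \<in> S3 \<and> y - Q *v y' \<in> Dg \<and> a = Q *v a'"
    if s: "(P, y, a) \<in> S3" for P y a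
  proof -
    have PA: "P \<in> A" and Ty: "tr P y \<in> \<T>" and a: "a \<in> fst (tr P y)" using s by (auto simp: S3_def)
    have "tr P y \<in> omega_patch \<omega> \<T>" using Ty fixp by simp
    then obtain T' where T': "T' \<in> \<T>" "tr P y \<in> \<omega> T'" unfolding omega_patch_def by blast
    obtain P' y' where P': "P' \<in> A" "T' = tr P' y'" using cover[OF T'(1)] by blast
    have "tr P y \<in> tr_patch (\<omega> P') (Q *v y')" using T'(2) P' omtr by simp
    then obtain S where S: "S \<in> \<omega> P'" "tr P y = tr S (Q *v y')" unfolding tr_patch_def by blast
    have "tr P (y - Q *v y') = tr (tr P y) (- (Q *v y'))" by (simp add: tr_tr)
    also have "\<dots> = S" by (simp add: S(2) tr_tr tr_0)
    finally have eqS: "tr P (y - Q *v y') = S" .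
    have "\<exists>P\<in>A. \<exists>P'\<in>A. tr P (y - Q *v y') \<in> \<omega> P'" using PA P'(1) S(1) eqS by blast
    then have tD: "y - Q *v y' \<in> Dg" unfolding Dg_def by simp
    have "a \<in> (\<lambda>v. v + Q *v y') ` fst S" using a S(2) by (simp add: fst_tr)
    then obtain b where b: "b \<in> fst S" "a = b + Q *v y'" by blast
    have "fst S \<subseteq> (\<Union>T\<in>\<omega> P'. fst T)" using S(1) by blast
    also have "\<dots> \<subseteq> supp (\<omega> P')" unfolding supp_def by (rule closure_subset)
    finally have "b \<in> (\<lambda>v. Q *v v) ` fst P'" using b(1) omsupp[OF P'(1)] by blast
    then obtain c where c: "c \<in> fst P'" "b = Q *v c" by blast
    have "a = Q *v (c + y')" using b c by (simp add: matrix_vector_right_distrib)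
    moreover have "c + y' \<in> fst (tr P' y')" using c by (simp add: fst_tr)
    moreover have "tr P' y' \<in> \<T>" using T' P' by simp
    ultimately show ?thesis using tD P'(1) unfolding S3_def by blast
  qed
  have "bounded (\<Union>P\<in>A. fst P)"
    using finA tilesA by (intro bounded_Union) (auto simp: is_tile_def compact_imp_bounded)
  then obtain R where R: "\<And>v. v \<in> (\<Union>P\<in>A. fst P) \<Longrightarrow> norm v \<le> R" by (meson bounded_iff)
  have Rb: "norm (a - y) \<le> R" if "(P, y, a) \<in> S3" for P y a
  proof -
    have "P \<in> A" "a \<in> (\<lambda>v. v + y) ` fst P" using that by (auto simp: S3_def fst_tr)
    then obtain v where v: "v \<in> fst P" "a = v + y" by blast
    then have "norm v \<le> R" using R \<open>P \<in> A\<close> by blast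
    then show ?thesis using v by simp
  qed
  have F: "finite {y. \<exists>P a. (P, y, a) \<in> S3 \<and> norm y \<le> R + 1}"
  proof (rule finite_subset)
    show "{y. \<exists>P a. (P, y, a) \<in> S3 \<and> norm y \<le> R + 1} \<subseteq> (\<Union>P\<in>A. {y. tr P y \<in> \<T> \<and> norm y \<le> R + 1})"
      by (auto simp: S3_def)
    show "finite (\<Union>P\<in>A. {y. tr P y \<in> \<T> \<and> norm y \<le> R + 1})"
      using finA by (intro finite_UN_I loc_fin patch tilesA) auto
  qed
  have shr: "\<exists>n. norm (a n) \<le> 1" if "\<And>n. Q *v a (Suc n) = a n" for a
    using shrink[where a=a, OF D1 that] .
  have "\<exists>B. \<forall>P y a. (P, y, a) \<in> S3 \<longrightarrow> cmod (\<psi> y) \<le> B"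
  proof (rule psi_bound[of \<psi> Q \<beta> Dg S3 R])
    show "\<And>u v. \<psi> (u + v) = \<psi> u + \<psi> v" by (rule add)
    show "\<And>v. \<psi> (Q *v v) = \<beta> * \<psi> v" by (rule eqv)
    show "cmod \<beta> < 1" by (rule b1)
    show "finite Dg" by (rule Dg)
    show "\<And>P y a. (P, y, a) \<in> S3 \<Longrightarrow> \<exists>P' y' a'. (P', y', a') \<in> S3 \<and> y - Q *v y' \<in> Dg \<and> a = Q *v a'"
      by (rule parent)
    show "\<And>a. (\<And>n. Q *v a (Suc n) = a n) \<Longrightarrow> \<exists>n. norm (a n) \<le> 1" by (rule shr)
    show "\<And>P y a. (P, y, a) \<in> S3 \<Longrightarrow> norm (a - y) \<le> R" by (rule Rb)
    show "finite {y. \<exists>P a. (P, y, a) \<in> S3 \<and> norm y \<le> R + 1}" by (rule F)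
  qed
  then obtain B where B: "\<And>P y a. (P, y, a) \<in> S3 \<Longrightarrow> cmod (\<psi> y) \<le> B" by blast
  have psin: "\<psi> (real n *\<^sub>R x) = of_nat n * \<psi> x" for n
  proof (induction n)
    case 0 then show ?case using add[of 0 0] by simp
  next
    case (Suc n)
    have "real (Suc n) *\<^sub>R x = x + real n *\<^sub>R x" by (simp add: algebra_simps)
    then show ?case using Suc add by (simp add: algebra_simps)
  qed
  have key: "real n * cmod (\<psi> x) \<le> 2 * B" if T: "T \<in> \<T>" and Tn: "tr T (real n *\<^sub>R x) \<in> \<T>" for T n
  proof -
    obtain P y where P: "P \<in> A" "T = tr P y" using cover[OF T] by blast
    obtain b where b: "b \<in> fst P" using tilesA[OF P(1)] unfolding is_tile_def by blast
    have "(P, y, b + y) \<in> S3" using P T b by (auto simp: S3_def fst_tr)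
    then have B1: "cmod (\<psi> y) \<le> B" by (rule B)
    have "(P, y + real n *\<^sub>R x, b + (y + real n *\<^sub>R x)) \<in> S3" using P Tn b by (auto simp: S3_def fst_tr tr_tr)
    then have B2: "cmod (\<psi> (y + real n *\<^sub>R x)) \<le> B" by (rule B)
    have "real n * cmod (\<psi> x) = cmod (\<psi> (y + real n *\<^sub>R x) - \<psi> y)"
      by (simp add: add psin norm_mult)
    also have "\<dots> \<le> cmod (\<psi> (y + real n *\<^sub>R x)) + cmod (\<psi> y)" by (rule norm_triangle_ineq4)
    finally show ?thesis using B1 B2 by simp
  qed
  define n0 where "n0 = nat \<lceil>2 * B / cmod (\<psi> x)\<rceil>"
  have part1: "\<forall>n>n0. \<forall>T\<in>\<T>. tr T (real n *\<^sub>R x) \<notin> \<T>"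
  proof (intro allI impI ballI notI)
    fix n T assume n: "n > n0" and T: "T \<in> \<T>" and Tn: "tr T (real n *\<^sub>R x) \<in> \<T>"
    have pos: "cmod (\<psi> x) > 0" using px by simp
    have "real n \<le> 2 * B / cmod (\<psi> x)" using key[OF T Tn] pos by (simp add: field_simps)
    then have "n \<le> n0" unfolding n0_def by linarith
    then show False using n by simp
  qed
  show "(\<exists>n0::nat. \<forall>n>n0. \<forall>T\<in>\<T>. tr T (real n *\<^sub>R x) \<notin> \<T>) \<and>
           (\<forall>T\<in>\<T>. \<exists>n0::nat. n0 > 0 \<and>
               \<not> legal \<T> {tr T (real k *\<^sub>R x) | k. 1 \<le> k \<and> k \<le> n0})"
  proof (intro conjI ballI)
    show "\<exists>n0::nat. \<forall>n>n0. \<forall>T\<in>\<T>. tr T (real n *\<^sub>R x) \<notin> \<T>" using part1 by blast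
    fix T assume T: "T \<in> \<T>"
    show "\<exists>N::nat. N > 0 \<and> \<not> legal \<T> {tr T (real k *\<^sub>R x) | k. 1 \<le> k \<and> k \<le> N}"
    proof (intro exI conjI)
      show "n0 + 2 > 0" by simp
      show "\<not> legal \<T> {tr T (real k *\<^sub>R x) | k. 1 \<le> k \<and> k \<le> n0 + 2}"
      proof
        assume "legal \<T> {tr T (real k *\<^sub>R x) | k. 1 \<le> k \<and> k \<le> n0 + 2}"
        then obtain z where z: "tr_patch {tr T (real k *\<^sub>R x) | k. 1 \<le> k \<and> k \<le> n0 + 2} z \<subseteq> \<T>"
          unfolding legal_def by blast
        have mem: "tr (tr T (real k *\<^sub>R x)) z \<in> \<T>" if "1 \<le> k" "k \<le> n0 + 2" for k
          using z that unfolding tr_patch_def by blast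
        have T1: "tr T (x + z) \<in> \<T>" using mem[of 1] by (simp add: tr_tr)
        have "tr (tr T (x + z)) (real (n0 + 1) *\<^sub>R x) = tr (tr T (real (n0 + 2) *\<^sub>R x)) z"
        proof -
          have "(x + z) + real (n0 + 1) *\<^sub>R x = real (n0 + 2) *\<^sub>R x + z"
            by (simp add: scaleR_add_left scaleR_2 add_ac)
          then show ?thesis by (simp only: tr_tr)
        qed
        then have "tr (tr T (x + z)) (real (n0 + 1) *\<^sub>R x) \<in> \<T>" using mem[of "n0 + 2"] by simp
        then show False using part1 T1 by auto
      qed
    qed
  qed
qed

end
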